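(* Let $G$ be a finitely generated group hyperbolic relative to a finite collection $\mathcal P$, $S$ a finite generating set, and let $(\epsilon,R,D)$ be thin-triangle constants. Let $U$ be a finite subset of $V\cup W$ that is not a single element of $W$. Then any two elements $a,b$ of the quasi-centre of $U$ satisfy $|a,b|_S\le 4D$.
   Context: $\Gamma$ is the Cayley graph of $G$ w.r.t. $S$, $V=G$, $W$ the set of cosets $gP_\lambda$; relative hyperbolicity means the coned-off Cayley graph (vertex set $V\cup W$, edges of $\Gamma$ plus edges $(v,w)$ for $v\in w$) is fine and $\delta$-hyperbolic. $|\cdot,\cdot|_S$ is extended to $V\cup W$ via distances in $\Gamma$ between corresponding elements/cosets. For a geodesic edge-path $p=(p_j)_{j=0}^\ell$ in $\Gamma$, $p_i$ is $(\epsilon,R)$-deep in $w\in W$ if $R\le i\le\ell-R$ and $|p_j,w|_S\le\epsilon$ for all $|j-i|\le R$. A geodesic from $a\in V\cup W$ to $b\in V\cup W$ is a geodesic of length $|a,b|_S$ starting at $a$ (if $a\in V$) or in $a$ (if $a\in W$), and ending analogously at $b$; for $i>\ell$, $p_i:=p_\ell$. Positive integers $(\epsilon,R,D)$ are thin-triangle constants if: $D\ge\epsilon$; no vertex of a geodesic in $\Gamma$ is $(\epsilon,R)$-deep in two distinct cosets; and for all $a,b,c\in V\cup W$ with $a\ne b$, geodesics $p^{ab},p^{bc},p^{ac}$ from $a$ to $b$, $b$ to $c$, $a$ to $c$, $\ell=|a,b|_S$, $0\le i\le\ell$, setting $z=w$ if $p^{ab}_i$ is $(\epsilon,R)$-deep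 in $w$ and $z=p^{ab}_i$ otherwise, we have $|z,p^{ac}_i|_S\le D$ or $|z,p^{bc}_{\ell-i}|_S\le D$ (such constants exist). For finite $U\subset V\cup W$, the radius $\rho(U)$ is the least $\rho$ such that some $z\in V\cup W$ has $|z,u|_S\le\rho$ for all $u\in U$; the quasi-centre of $U$ is the set of $z\in V\cup W$ with $|z,u|_S\le\rho(U)$ for all $u\in U$. *)

theory Defs
  imports "HOL-Algebra.Algebra"
begin

definition cay_adj :: "('g,'m) monoid_scheme \<Rightarrow> 'g set \<Rightarrow> 'g \<Rightarrow> 'g \<Rightarrow> bool" where
  "cay_adj G S g h \<longleftrightarrow> g \<in> carrier G \<and> h \<in> carrier G \<and>
     (\<exists>s\<in>S. h = g \<otimes>\<^bsub>G\<^esub> s \<or> g = h \<otimes>\<^bsub>G\<^esub> s)"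

definition cay_path :: "('g,'m) monoid_scheme \<Rightarrow> 'g set \<Rightarrow> (nat \<Rightarrow> 'g) \<Rightarrow> nat \<Rightarrow> bool" where
  "cay_path G S p l \<longleftrightarrow> p 0 \<in> carrier G \<and> (\<forall>j<l. cay_adj G S (p j) (p (Suc j)))
     \<and> (\<forall>i\<ge>l. p i = p l)"

definition wdist :: "('g,'m) monoid_scheme \<Rightarrow> 'g set \<Rightarrow> 'g \<Rightarrow> 'g \<Rightarrow> nat" where
  "wdist G S g h = (LEAST n. \<exists>p. cay_path G S p n \<and> p 0 = g \<and> p n = h)"

definition cay_geodesic :: "('g,'m) monoid_scheme \<Rightarrow> 'g set \<Rightarrow> (nat \<Rightarrow> 'g) \<Rightarrow> nat \<Rightarrow> bool" where
  "cay_geodesic G S p l \<longleftrightarrow> cay_path G S p l \<and> l = wdist G S (p 0) (p l)"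

section \<open>Cosets W and the set V \<union> W (as a disjoint sum)\<close>

definition cosets :: "('g,'m) monoid_scheme \<Rightarrow> ('i \<Rightarrow> 'g set) \<Rightarrow> 'i set \<Rightarrow> 'g set set" where
  "cosets G P \<Lambda> = {g <#\<^bsub>G\<^esub> P k | g k. g \<in> carrier G \<and> k \<in> \<Lambda>}"

definition VW :: "('g,'m) monoid_scheme \<Rightarrow> ('i \<Rightarrow> 'g set) \<Rightarrow> 'i set \<Rightarrow> ('g + 'g set) set" where
  "VW G P \<Lambda> = Inl ` carrier G \<union> Inr ` cosets G P \<Lambda>"

fun elts :: "'g + 'g set \<Rightarrow> 'g set" where
  "elts (Inl g) = {g}"
| "elts (Inr w) = w"

text \<open>|x,y|_S on V \<union> W: distance in Gamma between the corresponding elements/cosets.\<close>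
definition vdist :: "('g,'m) monoid_scheme \<Rightarrow> 'g set \<Rightarrow> 'g + 'g set \<Rightarrow> 'g + 'g set \<Rightarrow> nat" where
  "vdist G S x y = Inf {wdist G S g h | g h. g \<in> elts x \<and> h \<in> elts y}"

definition deep :: "('g,'m) monoid_scheme \<Rightarrow> 'g set \<Rightarrow> nat \<Rightarrow> nat \<Rightarrow> (nat \<Rightarrow> 'g) \<Rightarrow> nat \<Rightarrow> nat \<Rightarrow> 'g set \<Rightarrow> bool" where
  "deep G S eps R p l i w \<longleftrightarrow> R \<le> i \<and> i + R \<le> l \<and>
     (\<forall>j. i - R \<le> j \<and> j \<le> i + R \<longrightarrow> vdist G S (Inl (p j)) (Inr w) \<le> eps)"

definition geodesic_from :: "('g,'m) monoid_scheme \<Rightarrow> 'g set \<Rightarrow> 'g + 'g set \<Rightarrow> 'g + 'g set \<Rightarrow> (nat \<Rightarrow> 'g) \<Rightarrow> bool" where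
  "geodesic_from G S a b p \<longleftrightarrow> cay_path G S p (vdist G S a b) \<and> p 0 \<in> elts a \<and> p (vdist G S a b) \<in> elts b"

definition thin_triangle_constants ::
  "('g,'m) monoid_scheme \<Rightarrow> 'g set \<Rightarrow> ('i \<Rightarrow> 'g set) \<Rightarrow> 'i set \<Rightarrow> nat \<Rightarrow> nat \<Rightarrow> nat \<Rightarrow> bool" where
  "thin_triangle_constants G S P \<Lambda> eps R D \<longleftrightarrow>
     0 < eps \<and> 0 < R \<and> 0 < D \<and> eps \<le> D \<and>
     (\<forall>p l i w1 w2. cay_geodesic G S p l \<and> w1 \<in> cosets G P \<Lambda> \<and> w2 \<in> cosets G P \<Lambda> \<and>
        deep G S eps R p l i w1 \<and> deep G S eps R p l i w2 \<longrightarrow> w1 = w2) \<and>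
     (\<forall>a\<in>VW G P \<Lambda>. \<forall>b\<in>VW G P \<Lambda>. \<forall>c\<in>VW G P \<Lambda>. \<forall>pab pbc pac. a \<noteq> b \<and>
        geodesic_from G S a b pab \<and> geodesic_from G S b c pbc \<and> geodesic_from G S a c pac \<longrightarrow>
        (\<forall>i \<le> vdist G S a b.
           (\<forall>w\<in>cosets G P \<Lambda>. deep G S eps R pab (vdist G S a b) i w \<longrightarrow>
               vdist G S (Inr w) (Inl (pac i)) \<le> D \<or>
               vdist G S (Inr w) (Inl (pbc (vdist G S a b - i))) \<le> D) \<and>
           ((\<forall>w\<in>cosets G P \<Lambda>. \<not> deep G S eps R pab (vdist G S a b) i w) \<longrightarrow>
               vdist G S (Inl (pab i)) (Inl (pac i)) \<le> D \<or>
               vdist G S (Inl (pab i)) (Inl (pbc (vdist G S a b - i))) \<le> D)))"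

definition radius :: "('g,'m) monoid_scheme \<Rightarrow> 'g set \<Rightarrow> ('i \<Rightarrow> 'g set) \<Rightarrow> 'i set \<Rightarrow> ('g + 'g set) set \<Rightarrow> nat" where
  "radius G S P \<Lambda> U = (LEAST \<rho>. \<exists>z\<in>VW G P \<Lambda>. \<forall>u\<in>U. vdist G S z u \<le> \<rho>)"

definition quasi_centre :: "('g,'m) monoid_scheme \<Rightarrow> 'g set \<Rightarrow> ('i \<Rightarrow> 'g set) \<Rightarrow> 'i set \<Rightarrow> ('g + 'g set) set \<Rightarrow> ('g + 'g set) set" where
  "quasi_centre G S P \<Lambda> U = {z \<in> VW G P \<Lambda>. \<forall>u\<in>U. vdist G S z u \<le> radius G S P \<Lambda> U}"

definition graph_path :: "('v \<Rightarrow> 'v \<Rightarrow> bool) \<Rightarrow> (nat \<Rightarrow> 'v) \<Rightarrow> nat \<Rightarrow> bool" where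
  "graph_path A p l \<longleftrightarrow> (\<forall>j<l. A (p j) (p (Suc j)))"

definition gdist :: "('v \<Rightarrow> 'v \<Rightarrow> bool) \<Rightarrow> 'v \<Rightarrow> 'v \<Rightarrow> nat" where
  "gdist A x y = (LEAST n. \<exists>p. graph_path A p n \<and> p 0 = x \<and> p n = y)"

definition graph_geodesic :: "('v \<Rightarrow> 'v \<Rightarrow> bool) \<Rightarrow> (nat \<Rightarrow> 'v) \<Rightarrow> nat \<Rightarrow> bool" where
  "graph_geodesic A p l \<longleftrightarrow> graph_path A p l \<and> l = gdist A (p 0) (p l)"

definition hyperbolic_graph :: "('v \<Rightarrow> 'v \<Rightarrow> bool) \<Rightarrow> 'v set \<Rightarrow> nat \<Rightarrow> bool" where
  "hyperbolic_graph A V \<delta> \<longleftrightarrow>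
     (\<forall>x\<in>V. \<forall>y\<in>V. \<exists>p n. graph_path A p n \<and> p 0 = x \<and> p n = y) \<and>
     (\<forall>p q r lp lq lr. graph_geodesic A p lp \<and> graph_geodesic A q lq \<and> graph_geodesic A r lr \<and>
        p 0 \<in> V \<and> q 0 = p lp \<and> r 0 = p 0 \<and> r lr = q lq \<longrightarrow>
        (\<forall>i\<le>lp. (\<exists>j\<le>lq. gdist A (p i) (q j) \<le> \<delta>) \<or> (\<exists>j\<le>lr. gdist A (p i) (r j) \<le> \<delta>)))"

definition circuit :: "('v \<Rightarrow> 'v \<Rightarrow> bool) \<Rightarrow> 'v list \<Rightarrow> bool" where
  "circuit A c \<longleftrightarrow> length c \<ge> 3 \<and> distinct c \<and>
     (\<forall>i<length c. A (c ! i) (c ! ((i + 1) mod length c)))"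

definition fine_graph :: "('v \<Rightarrow> 'v \<Rightarrow> bool) \<Rightarrow> bool" where
  "fine_graph A \<longleftrightarrow> (\<forall>x y n. A x y \<longrightarrow>
     finite {c. circuit A c \<and> length c = n \<and>
        (\<exists>i<length c. {c ! i, c ! ((i + 1) mod length c)} = {x, y})})"

definition cone_adj :: "('g,'m) monoid_scheme \<Rightarrow> 'g set \<Rightarrow> ('i \<Rightarrow> 'g set) \<Rightarrow> 'i set \<Rightarrow> 'g + 'g set \<Rightarrow> 'g + 'g set \<Rightarrow> bool" where
  "cone_adj G S P \<Lambda> x y \<longleftrightarrow> x \<in> VW G P \<Lambda> \<and> y \<in> VW G P \<Lambda> \<and> x \<noteq> y \<and>
     ((\<exists>g h. x = Inl g \<and> y = Inl h \<and> cay_adj G S g h) \<or>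
      (\<exists>v w. x = Inl v \<and> y = Inr w \<and> v \<in> w) \<or>
      (\<exists>v w. x = Inr w \<and> y = Inl v \<and> v \<in> w))"

definition relatively_hyperbolic :: "('g,'m) monoid_scheme \<Rightarrow> 'g set \<Rightarrow> ('i \<Rightarrow> 'g set) \<Rightarrow> 'i set \<Rightarrow> bool" where
  "relatively_hyperbolic G S P \<Lambda> \<longleftrightarrow>
     group G \<and> finite S \<and> S \<subseteq> carrier G \<and> generate G S = carrier G \<and>
     finite \<Lambda> \<and> (\<forall>k\<in>\<Lambda>. subgroup (P k) G) \<and>
     fine_graph (cone_adj G S P \<Lambda>) \<and> (\<exists>\<delta>. hyperbolic_graph (cone_adj G S P \<Lambda>) (VW G P \<Lambda>) \<delta>)"

end

theory Submission
  imports Defs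
begin

lemma cay_adj_sym: "cay_adj G S g h \<Longrightarrow> cay_adj G S h g"
  unfolding cay_adj_def by blast

lemma cp_0: "cay_path G S p n \<Longrightarrow> p 0 \<in> carrier G"
  unfolding cay_path_def by blast
lemma cp_adj: "cay_path G S p n \<Longrightarrow> j < n \<Longrightarrow> cay_adj G S (p j) (p (Suc j))"
  unfolding cay_path_def by blast
lemma cp_end: "cay_path G S p n \<Longrightarrow> n \<le> i \<Longrightarrow> p i = p n"
  unfolding cay_path_def by blast
lemma cp_intro: "p 0 \<in> carrier G \<Longrightarrow> (\<And>j. j < n \<Longrightarrow> cay_adj G S (p j) (p (Suc j)))
   \<Longrightarrow> (\<And>i. n \<le> i \<Longrightarrow> p i = p n) \<Longrightarrow> cay_path G S p n"
  unfolding cay_path_def by blast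

lemma path_carrier:
  assumes "cay_path G S p n" shows "p j \<in> carrier G"
proof -
  have *: "p j \<in> carrier G" if "j \<le> n" for j
    using that
  proof (induction j)
    case 0 show ?case by (rule cp_0[OF assms])
  next
    case (Suc j)
    then have "cay_adj G S (p j) (p (Suc j))" using cp_adj[OF assms] by simp
    then show ?case unfolding cay_adj_def by blast
  qed
  show ?thesis
  proof (cases "j \<le> n")
    case True then show ?thesis using * by blast
  next
    case False then have "p j = p n" using cp_end[OF assms, of j] by simp
    then show ?thesis using *[of n] by simp
  qed
qed

lemma wdist_le: "cay_path G S p n \<Longrightarrow> p 0 = g \<Longrightarrow> p n = h \<Longrightarrow> wdist G S g h \<le> n"
  unfolding wdist_def by (rule Least_le) blast

lemma wdist_ex:
  assumes "cay_path G S p n" "p 0 = g" "p n = h"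
  shows "\<exists>q. cay_path G S q (wdist G S g h) \<and> q 0 = g \<and> q (wdist G S g h) = h"
  unfolding wdist_def by (rule LeastI_ex) (use assms in blast)

lemma path_concat:
  assumes P: "cay_path G S p n" and Q: "cay_path G S q m" and e: "p n = q 0"
  shows "cay_path G S (\<lambda>j. if j \<le> n then p j else q (j - n)) (n + m)"
proof (rule cp_intro)
  show "(if 0 \<le> n then p 0 else q (0 - n)) \<in> carrier G" using cp_0[OF P] by simp
next
  fix j assume j: "j < n + m"
  show "cay_adj G S (if j \<le> n then p j else q (j - n)) (if Suc j \<le> n then p (Suc j) else q (Suc j - n))"
  proof (cases "Suc j \<le> n")
    case True then show ?thesis using cp_adj[OF P, of j] by simp
  next
    case False
    show ?thesis
    proof (cases "j = n")
      case True
      then have "Suc j - n = Suc 0" "0 < m" using j by auto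
      then show ?thesis using True e cp_adj[OF Q, of 0] by simp
    next
      case False
      with \<open>\<not> Suc j \<le> n\<close> have "j > n" by simp
      then have "Suc j - n = Suc (j - n)" "j - n < m" using j by auto
      then show ?thesis using \<open>j > n\<close> cp_adj[OF Q, of "j - n"] by simp
    qed
  qed
next
  fix i assume i: "n + m \<le> i"
  show "(if i \<le> n then p i else q (i - n)) = (if n + m \<le> n then p (n + m) else q (n + m - n))"
  proof (cases "m = 0")
    case True
    then have "p i = p n" using cp_end[OF P, of i] i by simp
    then show ?thesis using True e cp_end[OF Q, of "i - n"] by simp
  next
    case False
    then show ?thesis using i cp_end[OF Q, of "i - n"] by simp
  qed
qed

lemma path_rev:
  assumes P: "cay_path G S p n"
  shows "cay_path G S (\<lambda>j. p (n - j)) n"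
proof (rule cp_intro)
  show "p (n - 0) \<in> carrier G" using path_carrier[OF P] .
next
  fix j assume "j < n"
  then have "cay_adj G S (p (n - Suc j)) (p (Suc (n - Suc j)))" using cp_adj[OF P] by simp
  moreover have "Suc (n - Suc j) = n - j" using \<open>j < n\<close> by simp
  ultimately show "cay_adj G S (p (n - j)) (p (n - Suc j))" using cay_adj_sym by metis
next
  fix i assume "n \<le> i" then show "p (n - i) = p (n - n)" by simp
qed

lemma path_shift:
  assumes P: "cay_path G S p n"
  shows "cay_path G S (\<lambda>j. p (j + i)) (n - i)"
proof (rule cp_intro)
  show "p (0 + i) \<in> carrier G" using path_carrier[OF P] .
next
  fix j assume "j < n - i" then show "cay_adj G S (p (j + i)) (p (Suc j + i))"
    using cp_adj[OF P, of "j + i"] by simp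
next
  fix j assume "n - i \<le> j"
  then have "p (j + i) = p n" "p (n - i + i) = p n" using cp_end[OF P, of "j+i"] cp_end[OF P, of "n-i+i"] by auto
  then show "p (j + i) = p (n - i + i)" by simp
qed

definition reach where "reach G S g h \<longleftrightarrow> (\<exists>p n. cay_path G S p n \<and> p 0 = g \<and> p n = h)"

lemma reach_trans: "reach G S g h \<Longrightarrow> reach G S h k \<Longrightarrow> reach G S g k"
  unfolding reach_def
proof (elim exE conjE)
  fix p n q m assume a: "cay_path G S p n" "p 0 = g" "p n = h" "cay_path G S q m" "q 0 = h" "q m = k"
  show "\<exists>p n. cay_path G S p n \<and> p 0 = g \<and> p n = k"
    apply (rule exI[of _ "\<lambda>j. if j \<le> n then p j else q (j - n)"], rule exI[of _ "n+m"])
    using path_concat[OF a(1) a(4)] a by (cases "m = 0") auto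
qed

lemma reach_refl: "g \<in> carrier G \<Longrightarrow> reach G S g g"
  unfolding reach_def by (rule exI[of _ "\<lambda>_. g"], rule exI[of _ 0]) (auto intro: cp_intro)

lemma reach_adj: assumes "cay_adj G S g h" shows "reach G S g h"
  unfolding reach_def
  apply (rule exI[of _ "\<lambda>j. if j = 0 then g else h"], rule exI[of _ 1])
  apply (intro conjI cp_intro)
  using assms by (auto simp: cay_adj_def)

lemma reach_gen:
  assumes G: "group G" "S \<subseteq> carrier G" and k: "k \<in> generate G S"
  shows "\<forall>g\<in>carrier G. reach G S g (g \<otimes>\<^bsub>G\<^esub> k)"
  using k
proof (induction k rule: generate.induct)
  interpret G: group G by fact
  case one then show ?case by (simp add: reach_refl)
next
  interpret G: group G by fact
  case (incl h) then show ?case using G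
    by (auto intro!: reach_adj simp: cay_adj_def subsetD)
next
  interpret G: group G by fact
  case (inv h)
  show ?case
  proof
    fix g assume g: "g \<in> carrier G"
    have h: "h \<in> carrier G" using inv G by auto
    have "g = (g \<otimes>\<^bsub>G\<^esub> inv\<^bsub>G\<^esub> h) \<otimes>\<^bsub>G\<^esub> h"
      using g h by (simp add: G.m_assoc)
    then show "reach G S g (g \<otimes>\<^bsub>G\<^esub> inv\<^bsub>G\<^esub> h)"
      unfolding cay_adj_def using inv g h by (intro reach_adj) (simp add: cay_adj_def, blast)
  qed
next
  interpret G: group G by fact
  case (eng h1 h2)
  have c: "h1 \<in> carrier G" "h2 \<in> carrier G"
    using eng(1,2) G G.generate_incl by blast+
  show ?case
  proof
    fix g assume g: "g \<in> carrier G"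
    have "reach G S g (g \<otimes>\<^bsub>G\<^esub> h1)" using eng g by blast
    moreover have "reach G S (g \<otimes>\<^bsub>G\<^esub> h1) ((g \<otimes>\<^bsub>G\<^esub> h1) \<otimes>\<^bsub>G\<^esub> h2)"
      using eng g c by simp
    ultimately show "reach G S g (g \<otimes>\<^bsub>G\<^esub> (h1 \<otimes>\<^bsub>G\<^esub> h2))"
      using reach_trans g c by (metis G.m_assoc)
  qed
qed

lemma connected:
  assumes G: "group G" "S \<subseteq> carrier G" "generate G S = carrier G"
    and g: "g \<in> carrier G" and h: "h \<in> carrier G"
  shows "reach G S g h"
proof -
  interpret G: group G by fact
  have "inv\<^bsub>G\<^esub> g \<otimes>\<^bsub>G\<^esub> h \<in> generate G S" using G g h by simp
  then have "reach G S g (g \<otimes>\<^bsub>G\<^esub> (inv\<^bsub>G\<^esub> g \<otimes>\<^bsub>G\<^esub> h))" using reach_gen[OF G(1,2)] g by blast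
  moreover have "g \<otimes>\<^bsub>G\<^esub> (inv\<^bsub>G\<^esub> g \<otimes>\<^bsub>G\<^esub> h) = h" using g h by (simp add: G.m_assoc[symmetric])
  ultimately show ?thesis by simp
qed


locale cg =
  fixes G :: "('g,'m) monoid_scheme" and S :: "'g set"
  assumes grp: "group G" and Ssub: "S \<subseteq> carrier G" and gen: "generate G S = carrier G"
begin

lemma wdist_real:
  assumes "g \<in> carrier G" "h \<in> carrier G"
  shows "\<exists>q. cay_path G S q (wdist G S g h) \<and> q 0 = g \<and> q (wdist G S g h) = h"
proof -
  obtain p n where "cay_path G S p n" "p 0 = g" "p n = h"
    using connected[OF grp Ssub gen assms] unfolding reach_def by blast
  then show ?thesis by (rule wdist_ex)
qed

lemma wdist_refl: "g \<in> carrier G \<Longrightarrow> wdist G S g g = 0"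
  using wdist_le[of G S "\<lambda>_. g" 0 g g] cp_intro[of "\<lambda>_. g" G 0 S] by simp

lemma wdist_sym_le:
  assumes "g \<in> carrier G" "h \<in> carrier G" shows "wdist G S h g \<le> wdist G S g h"
proof -
  obtain q where q: "cay_path G S q (wdist G S g h)" "q 0 = g" "q (wdist G S g h) = h"
    using wdist_real[OF assms] by blast
  show ?thesis using wdist_le[OF path_rev[OF q(1)]] q by simp
qed

lemma wdist_sym: "g \<in> carrier G \<Longrightarrow> h \<in> carrier G \<Longrightarrow> wdist G S h g = wdist G S g h"
  using wdist_sym_le by (meson antisym)

lemma wdist_tri:
  assumes "g \<in> carrier G" "h \<in> carrier G" "k \<in> carrier G"
  shows "wdist G S g k \<le> wdist G S g h + wdist G S h k"
proof -
  obtain p where p: "cay_path G S p (wdist G S g h)" "p 0 = g" "p (wdist G S g h) = h"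
    using wdist_real assms by blast
  obtain q where q: "cay_path G S q (wdist G S h k)" "q 0 = h" "q (wdist G S h k) = k"
    using wdist_real assms by blast
  show ?thesis
    using wdist_le[OF path_concat[OF p(1) q(1)]] p q by (cases "wdist G S h k = 0") auto
qed

definition ok where "ok x \<longleftrightarrow> elts x \<noteq> {} \<and> elts x \<subseteq> carrier G"

lemma vdist_le: "g \<in> elts x \<Longrightarrow> h \<in> elts y \<Longrightarrow> vdist G S x y \<le> wdist G S g h"
  unfolding vdist_def by (rule cInf_lower) auto

lemma vdist_att:
  assumes "ok x" "ok y"
  shows "\<exists>g\<in>elts x. \<exists>h\<in>elts y. vdist G S x y = wdist G S g h"
proof -
  have "{wdist G S g h | g h. g \<in> elts x \<and> h \<in> elts y} \<noteq> {}" using assms unfolding ok_def by blast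
  from Inf_nat_def1[OF this] show ?thesis unfolding vdist_def by blast
qed

lemma vdist_sym: assumes "ok x" "ok y" shows "vdist G S x y = vdist G S y x"
proof -
  obtain g h where gh: "g \<in> elts x" "h \<in> elts y" "vdist G S x y = wdist G S g h" using vdist_att assms by blast
  obtain g' h' where gh': "g' \<in> elts y" "h' \<in> elts x" "vdist G S y x = wdist G S g' h'" using vdist_att assms by blast
  have c: "g \<in> carrier G" "h \<in> carrier G" "g' \<in> carrier G" "h' \<in> carrier G"
    using gh gh' assms unfolding ok_def by blast+
  have "vdist G S y x \<le> wdist G S h g" using vdist_le gh by blast
  also have "\<dots> = wdist G S g h" using wdist_sym c by blast
  finally have 1: "vdist G S y x \<le> vdist G S x y" using gh by simp
  have "vdist G S x y \<le> wdist G S h' g'" using vdist_le gh' by blast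
  also have "\<dots> = wdist G S g' h'" using wdist_sym c by blast
  finally have 2: "vdist G S x y \<le> vdist G S y x" using gh' by simp
  from 1 2 show ?thesis by simp
qed

lemma ok_Inl: "m \<in> carrier G \<Longrightarrow> ok (Inl m)" by (simp add: ok_def)

lemma vdist_tri_pt:
  assumes "ok x" "ok y" "m \<in> carrier G"
  shows "vdist G S x y \<le> vdist G S x (Inl m) + vdist G S (Inl m) y"
proof -
  obtain g m1 where g: "g \<in> elts x" "m1 \<in> elts (Inl m)" "vdist G S x (Inl m) = wdist G S g m1"
    using vdist_att assms ok_Inl by blast
  obtain m2 h where h: "m2 \<in> elts (Inl m)" "h \<in> elts y" "vdist G S (Inl m) y = wdist G S m2 h"
    using vdist_att assms ok_Inl by blast
  have "vdist G S x y \<le> wdist G S g h" using vdist_le g h by blast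
  also have "\<dots> \<le> wdist G S g m + wdist G S m h" using wdist_tri assms g h unfolding ok_def by blast
  finally show ?thesis using g h by simp
qed

lemma vdist_path_end:
  assumes "cay_path G S p L" "p L \<in> elts c"
  shows "vdist G S (Inl (p i)) c \<le> L - i"
proof -
  have "vdist G S (Inl (p i)) c \<le> wdist G S (p i) (p L)" using vdist_le assms by simp
  also have "\<dots> \<le> L - i"
  proof (rule wdist_le[OF path_shift[OF assms(1), of i]])
    show "p (L - i + i) = p L"
      using cp_end[OF assms(1), of "L - i + i"] by (cases "i \<le> L") auto
  qed simp
  finally show ?thesis .
qed

lemma geo_ex:
  assumes "ok x" "ok y" shows "\<exists>p. geodesic_from G S x y p"
proof -
  obtain g h where gh: "g \<in> elts x" "h \<in> elts y" "vdist G S x y = wdist G S g h" using vdist_att assms by blast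
  then obtain q where "cay_path G S q (wdist G S g h) \<and> q 0 = g \<and> q (wdist G S g h) = h"
    using wdist_real assms unfolding ok_def by blast
  then show ?thesis unfolding geodesic_from_def using gh by metis
qed


lemma ok_VW:
  assumes "\<forall>k\<in>\<Lambda>. subgroup (P k) G" "x \<in> VW G P \<Lambda>"
  shows "ok x"
proof -
  interpret G: group G by (rule grp)
  show ?thesis
  proof (cases x)
    case (Inl g) then have "g \<in> carrier G" using assms(2) unfolding VW_def by blast
    then show ?thesis using Inl by (simp add: ok_def)
  next
    case (Inr w)
    have "w \<in> cosets G P \<Lambda>" using assms(2) Inr unfolding VW_def by blast
    then obtain g k where gk: "g \<in> carrier G" "k \<in> \<Lambda>" "w = g <#\<^bsub>G\<^esub> P k"
      unfolding cosets_def by blast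
    have sg: "subgroup (P k) G" using assms(1) gk(2) by blast
    have "g \<otimes>\<^bsub>G\<^esub> \<one>\<^bsub>G\<^esub> \<in> w" unfolding gk(3) l_coset_def
      using subgroup.one_closed[OF sg] by (rule UN_I) simp
    then have "g \<in> w" using gk(1) by simp
    moreover have "w \<subseteq> carrier G" unfolding gk(3)
      by (rule G.l_coset_subset_G[OF subgroup.subset[OF sg] gk(1)])
    ultimately show ?thesis using Inr unfolding ok_def by auto
  qed
qed

end

theorem lemma3p6:
  fixes G :: "('g,'m) monoid_scheme" and S :: "'g set" and P :: "'i \<Rightarrow> 'g set" and \<Lambda> :: "'i set"
    and eps R D :: nat and U :: "('g + 'g set) set" and a b :: "'g + 'g set"
  assumes "relatively_hyperbolic G S P \<Lambda>"
    and "thin_triangle_constants G S P \<Lambda> eps R D"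
    and "finite U" and "U \<subseteq> VW G P \<Lambda>" and "U \<noteq> {}"
    and "\<not> (\<exists>w\<in>cosets G P \<Lambda>. U = {Inr w})"
    and "a \<in> quasi_centre G S P \<Lambda> U" and "b \<in> quasi_centre G S P \<Lambda> U"
  shows "vdist G S a b \<le> 4 * D"
proof -
  have rh: "group G" "S \<subseteq> carrier G" "generate G S = carrier G" "\<forall>k\<in>\<Lambda>. subgroup (P k) G"
    using assms(1) unfolding relatively_hyperbolic_def by blast+
  interpret cg G S by (rule cg.intro[OF rh(1-3)])
  define \<rho> where "\<rho> = radius G S P \<Lambda> U"
  have aVW: "a \<in> VW G P \<Lambda>" and bVW: "b \<in> VW G P \<Lambda>"
    and aU: "\<forall>u\<in>U. vdist G S a u \<le> \<rho>" and bU: "\<forall>u\<in>U. vdist G S b u \<le> \<rho>"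
    using assms(7,8) unfolding quasi_centre_def \<rho>_def by auto
  have okV: "ok x" if "x \<in> VW G P \<Lambda>" for x using ok_VW rh(4) that by blast
  have oka: "ok a" and okb: "ok b" using okV aVW bVW by auto
  have okU: "ok u" if "u \<in> U" for u using okV assms(4) that by blast
  have Dpos: "0 < D" using assms(2) unfolding thin_triangle_constants_def by (elim conjE) assumption
  have Rpos: "0 < R" using assms(2) unfolding thin_triangle_constants_def by (elim conjE) assumption
  have T: "(\<forall>w\<in>cosets G P \<Lambda>. deep G S eps R pab (vdist G S A B) i w \<longrightarrow>
               vdist G S (Inr w) (Inl (pac i)) \<le> D \<or>
               vdist G S (Inr w) (Inl (pbc (vdist G S A B - i))) \<le> D) \<and>
           ((\<forall>w\<in>cosets G P \<Lambda>. \<not> deep G S eps R pab (vdist G S A B) i w) \<longrightarrow>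
               vdist G S (Inl (pab i)) (Inl (pac i)) \<le> D \<or>
               vdist G S (Inl (pab i)) (Inl (pbc (vdist G S A B - i))) \<le> D)"
    if "A \<in> VW G P \<Lambda>" "B \<in> VW G P \<Lambda>" "C \<in> VW G P \<Lambda>" "A \<noteq> B"
       "geodesic_from G S A B pab" "geodesic_from G S B C pbc" "geodesic_from G S A C pac"
       "i \<le> vdist G S A B" for A B C pab pbc pac i
  proof -
    have Tall: "\<forall>A\<in>VW G P \<Lambda>. \<forall>B\<in>VW G P \<Lambda>. \<forall>C\<in>VW G P \<Lambda>. \<forall>pab pbc pac. A \<noteq> B \<and>
        geodesic_from G S A B pab \<and> geodesic_from G S B C pbc \<and> geodesic_from G S A C pac \<longrightarrow>
        (\<forall>i \<le> vdist G S A B.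
           (\<forall>w\<in>cosets G P \<Lambda>. deep G S eps R pab (vdist G S A B) i w \<longrightarrow>
               vdist G S (Inr w) (Inl (pac i)) \<le> D \<or>
               vdist G S (Inr w) (Inl (pbc (vdist G S A B - i))) \<le> D) \<and>
           ((\<forall>w\<in>cosets G P \<Lambda>. \<not> deep G S eps R pab (vdist G S A B) i w) \<longrightarrow>
               vdist G S (Inl (pab i)) (Inl (pac i)) \<le> D \<or>
               vdist G S (Inl (pab i)) (Inl (pbc (vdist G S A B - i))) \<le> D))"
      using assms(2) unfolding thin_triangle_constants_def by (elim conjE)
    have "A \<noteq> B \<and> geodesic_from G S A B pab \<and> geodesic_from G S B C pbc \<and> geodesic_from G S A C pac"
      using that by simp
    from Tall[rule_format, OF that(1,2,3) this that(8)] show ?thesis .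
  qed
  show ?thesis
  proof (cases "\<rho> \<le> D")
    case True
    show ?thesis
    proof (cases "\<exists>u1\<in>U. \<exists>u2\<in>U. u1 \<noteq> u2")
      case True
      then obtain u1 u2 where u: "u1 \<in> U" "u2 \<in> U" "u1 \<noteq> u2" by blast
      have uVW: "u1 \<in> VW G P \<Lambda>" "u2 \<in> VW G P \<Lambda>" using u assms(4) by auto
      obtain pab where pab: "geodesic_from G S u1 u2 pab" using geo_ex okU u by blast
      define x where "x = pab 0"
      have xc: "x \<in> carrier G" using pab path_carrier unfolding x_def geodesic_from_def by blast
      have close: "vdist G S (Inl x) c \<le> 2 * D" if cVW: "c \<in> VW G P \<Lambda>"
        and cU: "\<forall>u\<in>U. vdist G S c u \<le> \<rho>" for c
      proof -
        have okc: "ok c" using okV cVW by blast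
        obtain pac where pac: "geodesic_from G S u1 c pac" using geo_ex okU u okc by blast
        obtain pbc where pbc: "geodesic_from G S u2 c pbc" using geo_ex okU u okc by blast
        have nd: "\<forall>w\<in>cosets G P \<Lambda>. \<not> deep G S eps R pab (vdist G S u1 u2) 0 w"
          using Rpos by (simp add: deep_def)
        have "vdist G S (Inl (pab 0)) (Inl (pac 0)) \<le> D \<or>
              vdist G S (Inl (pab 0)) (Inl (pbc (vdist G S u1 u2 - 0))) \<le> D"
          using T[OF uVW cVW u(3) pab pbc pac, of 0] nd by blast
        then show ?thesis
        proof
          assume h: "vdist G S (Inl (pab 0)) (Inl (pac 0)) \<le> D"
          have pc: "pac 0 \<in> carrier G" using pac path_carrier unfolding geodesic_from_def by blast
          have "vdist G S (Inl (pac 0)) c \<le> vdist G S u1 c - 0"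
            using pac vdist_path_end unfolding geodesic_from_def by blast
          moreover have "vdist G S u1 c \<le> \<rho>" using cU u okc okU vdist_sym by metis
          moreover have "vdist G S (Inl x) c \<le> vdist G S (Inl x) (Inl (pac 0)) + vdist G S (Inl (pac 0)) c"
            using vdist_tri_pt ok_Inl xc pc okc by blast
          ultimately show ?thesis using h \<open>\<rho> \<le> D\<close> unfolding x_def by linarith
        next
          let ?j = "vdist G S u1 u2 - 0"
          assume h: "vdist G S (Inl (pab 0)) (Inl (pbc ?j)) \<le> D"
          have pc: "pbc ?j \<in> carrier G" using pbc path_carrier unfolding geodesic_from_def by blast
          have "vdist G S (Inl (pbc ?j)) c \<le> vdist G S u2 c - ?j"
            using pbc vdist_path_end unfolding geodesic_from_def by blast
          moreover have "vdist G S u2 c \<le> \<rho>" using cU u okc okU vdist_sym by metis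
          moreover have "vdist G S (Inl x) c \<le> vdist G S (Inl x) (Inl (pbc ?j)) + vdist G S (Inl (pbc ?j)) c"
            using vdist_tri_pt ok_Inl xc pc okc by blast
          ultimately show ?thesis using h \<open>\<rho> \<le> D\<close> unfolding x_def by linarith
        qed
      qed
      have "vdist G S a b \<le> vdist G S a (Inl x) + vdist G S (Inl x) b"
        using vdist_tri_pt oka okb xc by blast
      also have "vdist G S a (Inl x) = vdist G S (Inl x) a" using vdist_sym oka ok_Inl xc by metis
      finally show ?thesis using close[OF aVW aU] close[OF bVW bU] by linarith
    next
      case False
      then obtain u where U1: "U = {u}" using assms(5) by blast
      then have "u \<in> VW G P \<Lambda>" using assms(4) by auto
      then obtain y where y: "u = Inl y" "y \<in> carrier G"
        using assms(6) U1 unfolding VW_def by auto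
      have "vdist G S a b \<le> vdist G S a (Inl y) + vdist G S (Inl y) b"
        using vdist_tri_pt oka okb y by blast
      also have "vdist G S (Inl y) b = vdist G S b (Inl y)" using vdist_sym okb ok_Inl y by metis
      finally show ?thesis using aU bU U1 y \<open>\<rho> \<le> D\<close> by auto
    qed
  next
    case False
    show ?thesis
    proof (rule ccontr)
      assume "\<not> vdist G S a b \<le> 4 * D"
      define l where "l = vdist G S a b"
      have lD: "l \<ge> 4 * D + 1" using \<open>\<not> vdist G S a b \<le> 4 * D\<close> l_def by simp
      have ab: "a \<noteq> b"
      proof
        assume "a = b"
        obtain g where "g \<in> elts a" using oka unfolding ok_def by blast
        then have "l \<le> wdist G S g g" using vdist_le \<open>a = b\<close> l_def by blast
        also have "\<dots> = 0" using wdist_refl oka \<open>g \<in> elts a\<close> unfolding ok_def by blast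
        finally show False using lD by simp
      qed
      obtain pab where pab: "geodesic_from G S a b pab" using geo_ex oka okb by blast
      define i where "i = l div 2"
      have il: "i \<le> l" "2 * D \<le> i" "2 * D \<le> l - i" using lD unfolding i_def by auto
      define dp where "dp = (\<exists>w\<in>cosets G P \<Lambda>. deep G S eps R pab l i w)"
      define z where "z = (if dp then Inr (SOME w. w \<in> cosets G P \<Lambda> \<and> deep G S eps R pab l i w)
                            else Inl (pab i))"
      have pic: "pab i \<in> carrier G" using pab path_carrier unfolding geodesic_from_def by blast
      have zVW: "z \<in> VW G P \<Lambda>"
      proof (cases dp)
        case True
        then have "(SOME w. w \<in> cosets G P \<Lambda> \<and> deep G S eps R pab l i w) \<in> cosets G P \<Lambda>"
          unfolding dp_def by (metis (mono_tags, lifting) someI_ex)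
        then show ?thesis using True unfolding z_def VW_def by auto
      next
        case False then show ?thesis using pic unfolding z_def VW_def by auto
      qed
      have okz: "ok z" using okV zVW by blast
      have zc: "vdist G S z (Inl (pac i)) \<le> D \<or> vdist G S z (Inl (pbc (l - i))) \<le> D"
        if "u \<in> VW G P \<Lambda>" "geodesic_from G S b u pbc" "geodesic_from G S a u pac" for u pbc pac
      proof (cases dp)
        case True
        let ?w = "SOME w. w \<in> cosets G P \<Lambda> \<and> deep G S eps R pab l i w"
        have w: "?w \<in> cosets G P \<Lambda> \<and> deep G S eps R pab l i ?w"
          using True unfolding dp_def by (metis (mono_tags, lifting) someI_ex)
        show ?thesis using T[OF aVW bVW that(1) ab pab that(2,3), of i] il w True
          unfolding z_def l_def by auto
      next
        case False
        show ?thesis using T[OF aVW bVW that(1) ab pab that(2,3), of i] il False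
          unfolding z_def l_def dp_def by auto
      qed
      have zU: "vdist G S z u \<le> \<rho> - 1" if uU: "u \<in> U" for u
      proof -
        have uVW: "u \<in> VW G P \<Lambda>" using uU assms(4) by auto
        obtain pac where pac: "geodesic_from G S a u pac" using geo_ex oka okU uU by blast
        obtain pbc where pbc: "geodesic_from G S b u pbc" using geo_ex okb okU uU by blast
        from zc[OF uVW pbc pac] show ?thesis
        proof
          assume h: "vdist G S z (Inl (pac i)) \<le> D"
          have pc: "pac i \<in> carrier G" using pac path_carrier unfolding geodesic_from_def by blast
          have "vdist G S (Inl (pac i)) u \<le> vdist G S a u - i"
            using pac vdist_path_end unfolding geodesic_from_def by blast
          moreover have "vdist G S a u \<le> \<rho>" using aU uU by blast
          moreover have "vdist G S z u \<le> vdist G S z (Inl (pac i)) + vdist G S (Inl (pac i)) u"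
            using vdist_tri_pt okz okU uU pc by blast
          ultimately show ?thesis using h \<open>\<not> \<rho> \<le> D\<close> il Dpos by linarith
        next
          assume h: "vdist G S z (Inl (pbc (l - i))) \<le> D"
          have pc: "pbc (l - i) \<in> carrier G" using pbc path_carrier unfolding geodesic_from_def by blast
          have "vdist G S (Inl (pbc (l - i))) u \<le> vdist G S b u - (l - i)"
            using pbc vdist_path_end unfolding geodesic_from_def by blast
          moreover have "vdist G S b u \<le> \<rho>" using bU uU by blast
          moreover have "vdist G S z u \<le> vdist G S z (Inl (pbc (l - i))) + vdist G S (Inl (pbc (l - i))) u"
            using vdist_tri_pt okz okU uU pc by blast
          ultimately show ?thesis using h \<open>\<not> \<rho> \<le> D\<close> il Dpos by linarith
        qed
      qed
      have ex: "\<exists>z\<in>VW G P \<Lambda>. \<forall>u\<in>U. vdist G S z u \<le> \<rho> - 1" using zVW zU by blast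
      have "\<rho> \<le> \<rho> - 1" using Least_le[of "\<lambda>r. \<exists>z\<in>VW G P \<Lambda>. \<forall>u\<in>U. vdist G S z u \<le> r", OF ex]
        unfolding \<rho>_def radius_def .
      then show False using \<open>\<not> \<rho> \<le> D\<close> Dpos by linarith
    qed
  qed
qed

end
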